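(* Let $\sum_i\lambda_i[\alpha_i][\beta_i]=0$ be a homogeneous Plücker relation on $t$-minors of degree $v$. Then for every $m\times n$ matrix $X$, every $t\times m$ matrix $A$ and every multiset $u$ of elements of $\{1,\dots,m\}$ of cardinality $2t$ one has $$\sum_c[c]_A\,[c']_A\sum_i\lambda_i\,[c\,|\,\alpha_i]_X\,[c'\,|\,\beta_i]_X=0,$$ where $c$ ranges over all strictly increasing sequences of length $t$ contained in $u$ (as sub-multisets) and $c'=u\setminus c$ (multiset difference).
   Context: A Plücker relation on $t$-minors is a relation $\sum_i\lambda_i[\alpha_i][\beta_i]=0$ with $\lambda_i\in\mathbb Z$, valid for the maximal minors of the generic $t\times n$ matrix, where $\alpha_i,\beta_i$ are increasing sequences of length $t$ in $\{1,\dots,n\}$ and $[\alpha]$ is the maximal minor with column indices $\alpha$. It is homogeneous of degree $v$ if the multiset union $\alpha_i\cup\beta_i$ equals the multiset $v$ for all $i$. For a $t\times m$ matrix $A$, $[c]_A$ is the maximal minor of $A$ with column indices $c$ (zero if $c$ has repeated entries), and $[c\,|\,\alpha]_X$ is the minor of $X$ with row indices $c$ and column indices $\alpha$. Matrices have entries in a commutative ring (e.g. a field $K$). *)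

theory Defs
  imports "Jordan_Normal_Form.Determinant" "HOL-Library.Multiset"
begin

text \<open>Matrices are functions nat => nat => 'a, with 1-based row/column indices.
  Index sequences are lists of natural numbers.\<close>

definition minor :: "(nat \<Rightarrow> nat \<Rightarrow> 'a::comm_ring_1) \<Rightarrow> nat list \<Rightarrow> nat list \<Rightarrow> 'a" where
  "minor M rs cs = det (mat (length rs) (length rs) (\<lambda>(i,j). M (rs ! i) (cs ! j)))"

definition maxminor :: "nat \<Rightarrow> (nat \<Rightarrow> nat \<Rightarrow> 'a::comm_ring_1) \<Rightarrow> nat list \<Rightarrow> 'a" where
  "maxminor t A cs = minor A [1..<t+1] cs"

definition incr_seq :: "nat \<Rightarrow> nat \<Rightarrow> nat list \<Rightarrow> bool" where
  "incr_seq t n a \<longleftrightarrow> sorted_wrt (<) a \<and> length a = t \<and> set a \<subseteq> {1..n}"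

text \<open>Validity for the
  generic matrix over Z is expressed as validity for all integer matrices
  (equivalent, since Z is an infinite domain).\<close>
definition pluecker_rel :: "nat \<Rightarrow> nat \<Rightarrow> (int \<times> nat list \<times> nat list) list \<Rightarrow> bool" where
  "pluecker_rel t n R \<longleftrightarrow>
     (\<forall>(l,a,b) \<in> set R. incr_seq t n a \<and> incr_seq t n b) \<and>
     (\<forall>G :: nat \<Rightarrow> nat \<Rightarrow> int.
        (\<Sum>(l,a,b)\<leftarrow>R. l * maxminor t G a * maxminor t G b) = 0)"

definition homogeneous_rel :: "nat multiset \<Rightarrow> (int \<times> nat list \<times> nat list) list \<Rightarrow> bool" where
  "homogeneous_rel v R \<longleftrightarrow> (\<forall>(l,a,b) \<in> set R. mset a + mset b = v)"

end

theory Submission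
  imports Defs
begin

lemma digits_bound:
  fixes B :: nat
  assumes "\<forall>v<N. f v < B"
  shows "(\<Sum>v<N. f v * B^v) < B^N"
  using assms
proof (induction N)
  case 0 then show ?case by simp
next
  case (Suc N)
  have "(\<Sum>v<Suc N. f v * B^v) = (\<Sum>v<N. f v * B^v) + f N * B^N" by simp
  also have "\<dots> < B^N + f N * B^N" using Suc by simp
  also have "\<dots> = (f N + 1) * B^N" by simp
  also have "\<dots> \<le> B * B^N" using Suc.prems by (intro mult_right_mono) auto
  finally show ?case by simp
qed

lemma digits_unique:
  fixes B :: nat
  assumes "\<forall>v<N. f v < B" "\<forall>v<N. g v < B"
    "(\<Sum>v<N. f v * B^v) = (\<Sum>v<N. g v * B^v)"
  shows "\<forall>v<N. f v = g v"
  using assms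
proof (induction N)
  case 0 then show ?case by simp
next
  case (Suc N)
  have bf: "(\<Sum>v<N. f v * B^v) < B^N" and bg: "(\<Sum>v<N. g v * B^v) < B^N"
    using Suc.prems by (auto intro!: digits_bound)
  have eq: "(\<Sum>v<N. f v * B^v) + f N * B^N = (\<Sum>v<N. g v * B^v) + g N * B^N"
    using Suc.prems(3) by simp
  have "((\<Sum>v<N. f v * B^v) + f N * B^N) div B^N = f N"
  proof -
    have "B^N \<noteq> 0" using bf by (metis less_nat_zero_code)
    then have "((\<Sum>v<N. f v * B^v) + f N * B^N) div B^N = f N + (\<Sum>v<N. f v * B^v) div B^N"
      by (rule div_mult_self1)
    then show ?thesis using bf by simp
  qed
  moreover have "((\<Sum>v<N. g v * B^v) + g N * B^N) div B^N = g N"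
  proof -
    have "B^N \<noteq> 0" using bg by (metis less_nat_zero_code)
    then have "((\<Sum>v<N. g v * B^v) + g N * B^N) div B^N = g N + (\<Sum>v<N. g v * B^v) div B^N"
      by (rule div_mult_self1)
    then show ?thesis using bg by simp
  qed
  ultimately have fN: "f N = g N" using eq by metis
  with eq have "(\<Sum>v<N. f v * B^v) = (\<Sum>v<N. g v * B^v)" by simp
  with Suc.IH Suc.prems have "\<forall>v<N. f v = g v" by auto
  with fN show ?case using less_Suc_eq by auto
qed

definition enc :: "nat \<Rightarrow> nat multiset \<Rightarrow> nat" where
  "enc B M = sum_mset (image_mset (\<lambda>v. B^v) M)"

lemma enc_add: "enc B (M + M') = enc B M + enc B M'"
  unfolding enc_def by simp

lemma enc_sum: "set_mset M \<subseteq> {..<N} \<Longrightarrow> enc B M = (\<Sum>v<N. count M v * B^v)"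
proof (induction M)
  case empty then show ?case by (simp add: enc_def)
next
  case (add x M)
  then have x: "x < N" and IH: "enc B M = (\<Sum>v<N. count M v * B^v)" by auto
  have "(\<Sum>v<N. count (add_mset x M) v * B^v) = (\<Sum>v<N. count M v * B^v + (if v = x then B^v else 0))"
    by (intro sum.cong) auto
  also have "\<dots> = (\<Sum>v<N. count M v * B^v) + B^x"
    using x by (simp add: sum.distrib)
  finally show ?case using IH by (simp add: enc_def)
qed

lemma enc_inj:
  assumes "\<forall>v. count M v < B" "\<forall>v. count M' v < B" "enc B M = enc B M'"
  shows "M = M'"
proof -
  obtain N where N: "set_mset M \<subseteq> {..<N}" "set_mset M' \<subseteq> {..<N}"
  proof -
    have "finite (set_mset M \<union> set_mset M')" by simp
    then obtain N where "\<forall>x \<in> set_mset M \<union> set_mset M'. x < N"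
      using finite_nat_bounded by (meson lessThan_iff subset_eq)
    then show ?thesis using that by auto
  qed
  have "\<forall>v<N. count M v = count M' v"
    by (rule digits_unique[of N _ B]) (use assms enc_sum[OF N(1)] enc_sum[OF N(2)] in auto)
  moreover have "\<forall>v\<ge>N. count M v = 0 \<and> count M' v = 0"
    using N by (auto simp: count_eq_zero_iff)
  ultimately show ?thesis
    by (metis multiset_eqI not_less)
qed

lemma power_enc: "(y::'b::comm_monoid_mult) ^ enc B M = prod_mset (image_mset (\<lambda>v. y ^ (B^v)) M)"
  by (induction M) (auto simp: enc_def power_add)

lemma mono_transfer:
  fixes \<kappa> :: "'j \<Rightarrow> int" and M :: "'j \<Rightarrow> nat multiset"
  assumes fin: "finite J" and cnt: "\<forall>j\<in>J. \<forall>v. count (M j) v < B"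
    and hyp: "\<forall>g::nat\<Rightarrow>int. (\<Sum>j\<in>J. \<kappa> j * prod_mset (image_mset g (M j))) = 0"
  shows "(\<Sum>j\<in>J. of_int (\<kappa> j) * prod_mset (image_mset g (M j))) = (0::'b::comm_ring_1)"
proof -
  define p :: "int poly" where "p = (\<Sum>j\<in>J. monom (\<kappa> j) (enc B (M j)))"
  have "poly p y = 0" for y
  proof -
    have "poly p y = (\<Sum>j\<in>J. \<kappa> j * y ^ enc B (M j))"
      unfolding p_def by (simp add: poly_sum poly_monom)
    also have "\<dots> = (\<Sum>j\<in>J. \<kappa> j * prod_mset (image_mset (\<lambda>v. y ^ (B^v)) (M j)))"
      by (simp add: power_enc)
    also have "\<dots> = 0" using hyp by blast
    finally show ?thesis .
  qed
  then have "poly p = poly 0" by auto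
  then have p0: "p = 0" using poly_eq_poly_eq_iff by blast
  have grp: "(\<Sum>j\<in>{j\<in>J. enc B (M j) = d}. \<kappa> j) = 0" for d
  proof -
    have "coeff p d = (\<Sum>j\<in>J. if enc B (M j) = d then \<kappa> j else 0)"
      unfolding p_def by (simp add: coeff_sum coeff_monom)
    also have "\<dots> = (\<Sum>j\<in>{j\<in>J. enc B (M j) = d}. \<kappa> j)"
      using fin by (simp add: sum.inter_filter)
    finally show ?thesis using p0 by simp
  qed
  let ?P = "\<lambda>j. prod_mset (image_mset g (M j))"
  have "(\<Sum>j\<in>J. of_int (\<kappa> j) * ?P j) =
     (\<Sum>d\<in>(\<lambda>j. enc B (M j)) ` J. \<Sum>j\<in>{j\<in>J. enc B (M j) = d}. of_int (\<kappa> j) * ?P j)"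
    by (rule sum.image_gen[OF fin])
  also have "\<dots> = 0"
  proof (rule sum.neutral, rule ballI)
    fix d assume "d \<in> (\<lambda>j. enc B (M j)) ` J"
    then obtain j0 where j0: "j0 \<in> J" "enc B (M j0) = d" by auto
    have "(\<Sum>j\<in>{j\<in>J. enc B (M j) = d}. of_int (\<kappa> j) * ?P j) =
          (\<Sum>j\<in>{j\<in>J. enc B (M j) = d}. of_int (\<kappa> j) * ?P j0)"
    proof (rule sum.cong[OF refl])
      fix j assume "j \<in> {j\<in>J. enc B (M j) = d}"
      then have "M j = M j0" using j0 cnt by (intro enc_inj[of _ B]) auto
      then show "of_int (\<kappa> j) * ?P j = of_int (\<kappa> j) * ?P j0" by simp
    qed
    also have "\<dots> = of_int (\<Sum>j\<in>{j\<in>J. enc B (M j) = d}. \<kappa> j) * ?P j0"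
      by (simp add: sum_distrib_right)
    also have "\<dots> = 0" using grp by simp
    finally show "(\<Sum>j\<in>{j\<in>J. enc B (M j) = d}. of_int (\<kappa> j) * ?P j) = 0" .
  qed
  finally show ?thesis .
qed

lemma maxminor_leib:
  "maxminor t G a = (\<Sum>p | p permutes {0..<t}. of_int (sign p) * (\<Prod>i=0..<t. G (Suc i) (a ! p i)))"
proof -
  have L: "length [1..<t+1] = t" by simp
  show ?thesis
  unfolding maxminor_def minor_def L
  apply (subst det_def'[of _ t])
   apply simp
  apply (intro sum.cong refl arg_cong2[where f="(*)"] prod.cong)
  apply (auto simp: permutes_in_image nth_upt simp del: upt_Suc)
  done
qed

lemma minor_leib:
  "minor X c a = (\<Sum>p | p permutes {0..<length c}. of_int (sign p) * (\<Prod>i=0..<length c. X (c!i) (a ! p i)))"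
  unfolding minor_def
  apply (subst det_def'[of _ "length c"])
   apply simp
  apply (intro sum.cong refl arg_cong2[where f="(*)"] prod.cong)
  apply (auto simp: permutes_in_image)
  done

lemma const_poly_hom: "comm_ring_hom (\<lambda>x::'a::comm_ring_1. [:x:])"
  by unfold_locales (auto simp: one_pCons)

lemma minor_const: "minor (\<lambda>i j. [:X i j:]) c a = [:minor X c a:]"
proof -
  interpret h: comm_ring_hom "\<lambda>x::'a::comm_ring_1. [:x:]" by (rule const_poly_hom)
  have "mat (length c) (length c) (\<lambda>(i,j). [:X (c!i) (a!j):]) =
     map_mat (\<lambda>x. [:x:]) (mat (length c) (length c) (\<lambda>(i,j). X (c!i) (a!j)))"
    by (rule eq_matI) auto
  then show ?thesis unfolding minor_def by simp
qed

lemma prod_mset_image_sum: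
  "finite I \<Longrightarrow> prod_mset (image_mset h (\<Sum>i\<in>I. F i)) = (\<Prod>i\<in>I. prod_mset (image_mset h (F i)))"
  by (induction I rule: finite_induct) auto

definition dec :: "nat \<Rightarrow> (nat \<Rightarrow> nat \<Rightarrow> 'b) \<Rightarrow> nat \<Rightarrow> 'b" where
  "dec N G v = G (Suc (v div N)) (v mod N)"

definition pos :: "nat \<Rightarrow> nat \<Rightarrow> nat \<Rightarrow> nat" where "pos N i k = i*N + k"

definition Mm :: "nat \<Rightarrow> nat \<Rightarrow> nat list \<Rightarrow> nat list \<Rightarrow> (nat \<Rightarrow> nat) \<Rightarrow> (nat \<Rightarrow> nat) \<Rightarrow> nat multiset" where
  "Mm t N a b p p' = (\<Sum>i\<in>{0..<t}. {# pos N i (a!p i), pos N i (b!p' i) #})"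

lemma Mm_count: "count (Mm t N a b p p') v < 2*t+1"
proof -
  have "count (Mm t N a b p p') v = (\<Sum>i\<in>{0..<t}. count {# pos N i (a!p i), pos N i (b!p' i) #} v)"
    unfolding Mm_def by (simp add: count_sum)
  also have "\<dots> \<le> (\<Sum>i\<in>{0..<t}. 2)"
    by (intro sum_mono) auto
  finally show ?thesis by simp
qed

lemma dec_enc: "k < N \<Longrightarrow> dec N G (pos N i k) = G (Suc i) k"
  unfolding dec_def pos_def by simp

lemma mm_expand:
  fixes G :: "nat \<Rightarrow> nat \<Rightarrow> 'b::comm_ring_1"
  assumes a: "incr_seq t n a" and b: "incr_seq t n b"
  shows "maxminor t G a * maxminor t G b =
    (\<Sum>p\<in>{p. p permutes {0..<t}}. \<Sum>p'\<in>{p. p permutes {0..<t}}.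
       of_int (sign p * sign p') * prod_mset (image_mset (dec (Suc n) G) (Mm t (Suc n) a b p p')))"
proof -
  have la: "length a = t" "set a \<subseteq> {1..n}" and lb: "length b = t" "set b \<subseteq> {1..n}"
    using a b unfolding incr_seq_def by auto
  show ?thesis
    unfolding maxminor_leib sum_product
  proof (intro sum.cong refl)
    fix p p' assume p: "p \<in> {p. p permutes {0..<t}}" and p': "p' \<in> {p. p permutes {0..<t}}"
    have "prod_mset (image_mset (dec (Suc n) G) (Mm t (Suc n) a b p p')) =
       (\<Prod>i\<in>{0..<t}. G (Suc i) (a ! p i) * G (Suc i) (b ! p' i))"
      unfolding Mm_def
    proof (subst prod_mset_image_sum, simp, intro prod.cong refl)
      fix i assume i: "i \<in> {0..<t}"
      then have "p i < t" "p' i < t" using p p' by (auto simp: permutes_in_image)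
      then have "a ! p i \<in> set a" "b ! p' i \<in> set b" using la lb by auto
      then have "a ! p i < Suc n" "b ! p' i < Suc n" using la lb by auto
      then show "prod_mset (image_mset (dec (Suc n) G) {# pos (Suc n) i (a!p i), pos (Suc n) i (b!p' i) #}) =
          G (Suc i) (a ! p i) * G (Suc i) (b ! p' i)"
        by (simp add: dec_enc)
    qed
    then show "of_int (sign p) * (\<Prod>i = 0..<t. G (Suc i) (a ! p i)) *
         (of_int (sign p') * (\<Prod>i = 0..<t. G (Suc i) (b ! p' i))) =
         of_int (sign p * sign p') * prod_mset (image_mset (dec (Suc n) G) (Mm t (Suc n) a b p p'))"
      by (simp add: prod.distrib)
  qed
qed

lemma pluecker_expand:
  fixes G :: "nat \<Rightarrow> nat \<Rightarrow> 'b::comm_ring_1"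
  assumes R: "\<forall>(l,a,b) \<in> set R. incr_seq t n a \<and> incr_seq t n b"
  defines "P \<equiv> {p. p permutes {0..<t}}"
  shows "(\<Sum>(l,a,b)\<leftarrow>R. of_int l * maxminor t G a * maxminor t G b) =
    (\<Sum>(q,p,p')\<in>{0..<length R} \<times> (P \<times> P).
       of_int (case R!q of (l,a,b) \<Rightarrow> l * sign p * sign p') *
       prod_mset (image_mset (dec (Suc n) G) (case R!q of (l,a,b) \<Rightarrow> Mm t (Suc n) a b p p')))"
proof -
  have "(\<Sum>(l,a,b)\<leftarrow>R. of_int l * maxminor t G a * maxminor t G b) =
     (\<Sum>q\<in>{0..<length R}. case R!q of (l,a,b) \<Rightarrow> of_int l * maxminor t G a * maxminor t G b)"
    by (subst sum_list_sum_nth) simp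
  also have "\<dots> = (\<Sum>q\<in>{0..<length R}. \<Sum>p\<in>P. \<Sum>p'\<in>P.
       of_int (case R!q of (l,a,b) \<Rightarrow> l * sign p * sign p') *
       prod_mset (image_mset (dec (Suc n) G) (case R!q of (l,a,b) \<Rightarrow> Mm t (Suc n) a b p p')))"
  proof (rule sum.cong[OF refl])
    fix q assume q: "q \<in> {0..<length R}"
    obtain l a b where lab: "R!q = (l,a,b)" by (cases "R!q") auto
    have "(l,a,b) \<in> set R" using q lab by (metis atLeastLessThan_iff nth_mem)
    then have ab: "incr_seq t n a" "incr_seq t n b" using R by auto
    show "(case R!q of (l,a,b) \<Rightarrow> of_int l * maxminor t G a * maxminor t G b) = (\<Sum>p\<in>P. \<Sum>p'\<in>P.
       of_int (case R!q of (l,a,b) \<Rightarrow> l * sign p * sign p') *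
       prod_mset (image_mset (dec (Suc n) G) (case R!q of (l,a,b) \<Rightarrow> Mm t (Suc n) a b p p')))"
      unfolding lab P_def using mm_expand[OF ab, of G]
      by (simp add: mult.assoc sum_distrib_left)
  qed
  also have "\<dots> = (\<Sum>(q,p,p')\<in>{0..<length R} \<times> (P \<times> P).
       of_int (case R!q of (l,a,b) \<Rightarrow> l * sign p * sign p') *
       prod_mset (image_mset (dec (Suc n) G) (case R!q of (l,a,b) \<Rightarrow> Mm t (Suc n) a b p p')))"
    by (simp add: sum.cartesian_product)
  finally show ?thesis .
qed

lemma pluecker_any:
  fixes G :: "nat \<Rightarrow> nat \<Rightarrow> 'b::comm_ring_1"
  assumes "pluecker_rel t n R"
  shows "(\<Sum>(l,a,b)\<leftarrow>R. of_int l * maxminor t G a * maxminor t G b) = 0"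
proof -
  have R: "\<forall>(l,a,b) \<in> set R. incr_seq t n a \<and> incr_seq t n b"
    and H: "\<forall>G :: nat \<Rightarrow> nat \<Rightarrow> int. (\<Sum>(l,a,b)\<leftarrow>R. l * maxminor t G a * maxminor t G b) = 0"
    using assms unfolding pluecker_rel_def by auto
  define P where "P = {p. p permutes {0..<t}}"
  define J where "J = {0..<length R} \<times> (P \<times> P)"
  define \<kappa> where "\<kappa> = (\<lambda>(q::nat,p::nat\<Rightarrow>nat,p'::nat\<Rightarrow>nat). case R!q of (l,a,b) \<Rightarrow> l * sign p * sign p')"
  define M where "M = (\<lambda>(q,p,p'). case R!q of (l,a,b) \<Rightarrow> Mm t (Suc n) a b p p')"
  have E: "(\<Sum>(l,a,b)\<leftarrow>R. of_int l * maxminor t G' a * maxminor t G' b) =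
     (\<Sum>j\<in>J. of_int (\<kappa> j) * prod_mset (image_mset (dec (Suc n) G') (M j)))"
    for G' :: "nat \<Rightarrow> nat \<Rightarrow> 'b"
    unfolding pluecker_expand[OF R, of G'] J_def P_def \<kappa>_def M_def
    by (intro sum.cong refl) (auto split: prod.splits)
  have Ei: "(\<Sum>(l,a,b)\<leftarrow>R. of_int l * maxminor t G' a * maxminor t G' b) =
     (\<Sum>j\<in>J. of_int (\<kappa> j) * prod_mset (image_mset (dec (Suc n) G') (M j)))"
    for G' :: "nat \<Rightarrow> nat \<Rightarrow> int"
    unfolding pluecker_expand[OF R, of G'] J_def P_def \<kappa>_def M_def
    by (intro sum.cong refl) (auto split: prod.splits)
  have fin: "finite J" unfolding J_def P_def by (auto intro: finite_permutations)
  have cnt: "\<forall>j\<in>J. \<forall>v. count (M j) v < 2*t+1"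
    unfolding M_def using Mm_count by (auto split: prod.splits simp del: Suc_eq_plus1 One_nat_def)
  have hyp: "\<forall>g::nat\<Rightarrow>int. (\<Sum>j\<in>J. \<kappa> j * prod_mset (image_mset g (M j))) = 0"
  proof
    fix g :: "nat \<Rightarrow> int"
    define G0 where "G0 = (\<lambda>r k. g ((r - 1) * Suc n + k))"
    have dg: "dec (Suc n) G0 = g"
      unfolding dec_def G0_def by (simp add: fun_eq_iff div_mult_mod_eq del: mult_Suc_right)
    have "(\<Sum>j\<in>J. \<kappa> j * prod_mset (image_mset g (M j))) =
      (\<Sum>(l,a,b)\<leftarrow>R. of_int l * maxminor t G0 a * maxminor t G0 b)"
      using Ei[of G0] unfolding dg by simp
    also have "\<dots> = 0" using H by simp
    finally show "(\<Sum>j\<in>J. \<kappa> j * prod_mset (image_mset g (M j))) = 0" .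
  qed
  show ?thesis
    unfolding E using mono_transfer[OF fin cnt hyp] .
qed

lemma minor_map_perm:
  assumes c: "length c = t" and p: "p permutes {0..<t}"
  shows "minor X (map (\<lambda>i. c ! p i) [0..<t]) a = of_int (sign p) * minor X c a"
proof -
  let ?A = "mat t t (\<lambda>(i,j). X (c!i) (a!j))"
  have "mat t t (\<lambda>(i,j). ?A $$ (p i, j)) = mat t t (\<lambda>(i,j). X (map (\<lambda>i. c ! p i) [0..<t] ! i) (a!j))"
  proof (rule eq_matI)
    fix i j assume "i < dim_row (mat t t (\<lambda>(i,j). X (map (\<lambda>i. c ! p i) [0..<t] ! i) (a!j)))"
      "j < dim_col (mat t t (\<lambda>(i,j). X (map (\<lambda>i. c ! p i) [0..<t] ! i) (a!j)))"
    then have ij: "i < t" "j < t" by auto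
    then have "p i < t" using p by (auto simp: permutes_in_image)
    then show "mat t t (\<lambda>(i,j). ?A $$ (p i, j)) $$ (i,j) = mat t t (\<lambda>(i,j). X (map (\<lambda>i. c ! p i) [0..<t] ! i) (a!j)) $$ (i,j)"
      using ij by simp
  qed auto
  then show ?thesis
    using det_permute_rows[of ?A t p] p c unfolding minor_def by simp
qed

lemma minor_noninj:
  assumes "\<not> inj_on f {0..<t}"
  shows "minor X (map f [0..<t]) a = 0"
proof -
  obtain i j where ij: "i < t" "j < t" "i \<noteq> j" "f i = f j"
    using assms unfolding inj_on_def by auto
  let ?A = "mat t t (\<lambda>(i,j). X (map f [0..<t] ! i) (a!j))"
  have "row ?A i = row ?A j" using ij by (auto simp: row_mat)
  then have "det ?A = 0" using ij by (intro det_identical_rows[of ?A t i j]) auto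
  then show ?thesis unfolding minor_def by simp
qed

lemma cb_bij:
  fixes t m :: nat
  defines "Inc \<equiv> {c. sorted_wrt (<) c \<and> length c = t \<and> set c \<subseteq> {1..m}}"
    and "P \<equiv> {p. p permutes {0..<t}}"
    and "K \<equiv> {1..m}"
  defines "F \<equiv> PiE {0..<t} (\<lambda>_. K)"
  defines "Fi \<equiv> {f\<in>F. inj_on f {0..<t}}"
  defines "h \<equiv> (\<lambda>(c::nat list, p::nat\<Rightarrow>nat). restrict (\<lambda>i. c ! p i) {0..<t})"
  shows "bij_betw h (Inc \<times> P) Fi"
proof (rule bij_betwI')
  fix x y assume x: "x \<in> Inc \<times> P" and y: "y \<in> Inc \<times> P"
  obtain c p where cp: "x = (c,p)" by (cases x)
  obtain c' p' where cp': "y = (c',p')" by (cases y)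
  have c: "sorted_wrt (<) c" "length c = t" and p: "p permutes {0..<t}"
    using x cp unfolding Inc_def P_def by auto
  have c': "sorted_wrt (<) c'" "length c' = t" and p': "p' permutes {0..<t}"
    using y cp' unfolding Inc_def P_def by auto
  show "(h x = h y) = (x = y)"
  proof
    assume "h x = h y"
    then have eq: "\<And>i. i < t \<Longrightarrow> c ! p i = c' ! p' i"
      unfolding cp cp' h_def by (metis (mono_tags, lifting) atLeastLessThan_iff case_prod_conv restrict_apply' zero_le)
    have "set c = (\<lambda>i. c ! p i) ` {0..<t}"
    proof -
      have "set c = (\<lambda>i. c ! i) ` {0..<t}" using c by (auto simp: set_conv_nth)
      also have "\<dots> = (\<lambda>i. c ! i) ` (p ` {0..<t})" using permutes_image[OF p] by simp
      finally show ?thesis by (simp add: image_image)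
    qed
    moreover have "set c' = (\<lambda>i. c' ! p' i) ` {0..<t}"
    proof -
      have "set c' = (\<lambda>i. c' ! i) ` {0..<t}" using c' by (auto simp: set_conv_nth)
      also have "\<dots> = (\<lambda>i. c' ! i) ` (p' ` {0..<t})" using permutes_image[OF p'] by simp
      finally show ?thesis by (simp add: image_image)
    qed
    ultimately have "set c = set c'" using eq by auto
    then have cc: "c = c'" using c c' strict_sorted_equal by metis
    have dc: "distinct c" using c strict_sorted_iff by blast
    have "p i = p' i" for i
    proof (cases "i < t")
      case True
      then have "p i < t" "p' i < t" using p p' by (auto simp: permutes_in_image)
      then show ?thesis using eq[OF True] cc dc c nth_eq_iff_index_eq by metis
    next
      case False
      then show ?thesis using p p' by (simp add: permutes_not_in)
    qed
    then show "x = y" using cp cp' cc by auto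
  qed auto
next
  fix x assume x: "x \<in> Inc \<times> P"
  obtain c p where cp: "x = (c,p)" by (cases x)
  have c: "sorted_wrt (<) c" "length c = t" "set c \<subseteq> {1..m}" and p: "p permutes {0..<t}"
    using x cp unfolding Inc_def P_def by auto
  have dc: "distinct c" using c strict_sorted_iff by blast
  have "c ! p i \<in> K" if "i < t" for i
  proof -
    have "p i < t" using that p by (auto simp: permutes_in_image)
    then have "c ! p i \<in> set c" using c by auto
    then show ?thesis using c K_def by blast
  qed
  moreover have "inj_on (\<lambda>i. c ! p i) {0..<t}"
  proof (rule inj_onI)
    fix i j assume "i \<in> {0..<t}" "j \<in> {0..<t}" "c ! p i = c ! p j"
    moreover then have "p i < t" "p j < t" using p by (auto simp: permutes_in_image)
    ultimately have "p i = p j" using dc c nth_eq_iff_index_eq by metis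
    then show "i = j" using permutes_inj[OF p] by (auto dest: injD)
  qed
  ultimately show "h x \<in> Fi" unfolding h_def cp Fi_def F_def by (auto simp: inj_on_def)
next
  fix f assume f: "f \<in> Fi"
  then have fF: "f \<in> F" and fi: "inj_on f {0..<t}" unfolding Fi_def by auto
  define S where "S = f ` {0..<t}"
  define c where "c = sorted_list_of_set S"
  have finS: "finite S" unfolding S_def by simp
  have setc: "set c = S" unfolding c_def using finS by simp
  have lc: "length c = t" unfolding c_def using fi finS by (simp add: S_def card_image)
  have sc: "sorted_wrt (<) c" unfolding c_def by (rule strict_sorted_list_of_set)
  have dc: "distinct c" unfolding c_def by simp
  have SK: "S \<subseteq> K" using fF unfolding S_def F_def by auto
  have cInc: "c \<in> Inc" unfolding Inc_def using sc lc setc SK K_def by auto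
  have ex: "\<exists>j. j < t \<and> c ! j = f i" if "i < t" for i
  proof -
    have "f i \<in> set c" using that setc S_def by auto
    then show ?thesis using lc by (auto simp: in_set_conv_nth)
  qed
  define p where "p = (\<lambda>i. if i < t then (SOME j. j < t \<and> c ! j = f i) else i)"
  have pp: "p i < t \<and> c ! p i = f i" if "i < t" for i
    using someI_ex[OF ex[OF that]] that unfolding p_def by auto
  have pperm: "p permutes {0..<t}"
  proof (rule inj_on_nat_permutes)
    show "inj_on p {0..<t}"
    proof (rule inj_onI)
      fix i j assume ij: "i \<in> {0..<t}" "j \<in> {0..<t}" "p i = p j"
      then have "f i = f j" using pp[of i] pp[of j] by simp
      then show "i = j" using inj_onD[OF fi] ij by simp
    qed
    show "p \<in> {0..<t} \<rightarrow> {0..<t}" using pp by auto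
    show "\<And>i. i \<notin> {0..<t} \<Longrightarrow> p i = i" unfolding p_def by auto
  qed simp
  have "h (c,p) = f"
  proof
    fix i show "h (c,p) i = f i"
    proof (cases "i < t")
      case True then show ?thesis using pp unfolding h_def by auto
    next
      case False then show ?thesis using fF unfolding h_def F_def by (auto simp: PiE_def extensional_def)
    qed
  qed
  moreover have "(c,p) \<in> Inc \<times> P" using cInc pperm unfolding P_def by auto
  ultimately show "\<exists>x\<in>Inc \<times> P. f = h x" by metis
qed

lemma cauchy_binet:
  fixes A X :: "nat \<Rightarrow> nat \<Rightarrow> 'b::comm_ring_1"
  shows "maxminor t (\<lambda>r j. \<Sum>k\<in>{1..m}. A r k * X k j) \<alpha> =
    (\<Sum>c\<in>{c. sorted_wrt (<) c \<and> length c = t \<and> set c \<subseteq> {1..m}}. maxminor t A c * minor X c \<alpha>)"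
proof -
  define Inc where "Inc = {c. sorted_wrt (<) c \<and> length c = t \<and> set c \<subseteq> {1..m}}"
  define P where "P = {p. p permutes {0..<t}}"
  define K where "K = {1..m}"
  define F where "F = PiE {0..<t} (\<lambda>_. K)"
  define Fi where "Fi = {f\<in>F. inj_on f {0..<t}}"
  define g where "g = (\<lambda>f. (\<Prod>i=0..<t. A (Suc i) (f i)) * minor X (map f [0..<t]) \<alpha>)"
  have finF: "finite F" unfolding F_def K_def by (intro finite_PiE) auto
  have finP: "finite P" unfolding P_def by (rule finite_permutations) simp
  have mleib: "minor X (map f [0..<t]) \<alpha> = (\<Sum>p\<in>P. of_int (sign p) * (\<Prod>i=0..<t. X (f i) (\<alpha> ! p i)))" for f
    unfolding minor_leib P_def by (intro sum.cong refl arg_cong2[where f="(*)"] prod.cong) auto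
  have "maxminor t (\<lambda>r j. \<Sum>k\<in>{1..m}. A r k * X k j) \<alpha> =
     (\<Sum>p\<in>P. of_int (sign p) * (\<Prod>i\<in>{0..<t}. \<Sum>k\<in>K. A (Suc i) k * X k (\<alpha> ! p i)))"
    unfolding maxminor_leib P_def K_def ..
  also have "\<dots> = (\<Sum>p\<in>P. of_int (sign p) * (\<Sum>f\<in>F. \<Prod>i\<in>{0..<t}. A (Suc i) (f i) * X (f i) (\<alpha> ! p i)))"
    unfolding F_def K_def by (subst prod_sum_PiE) auto
  also have "\<dots> = (\<Sum>f\<in>F. \<Sum>p\<in>P. (\<Prod>i=0..<t. A (Suc i) (f i)) * (of_int (sign p) * (\<Prod>i=0..<t. X (f i) (\<alpha> ! p i))))"
  proof -
    have "(\<Sum>p\<in>P. of_int (sign p) * (\<Sum>f\<in>F. \<Prod>i\<in>{0..<t}. A (Suc i) (f i) * X (f i) (\<alpha> ! p i))) =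
      (\<Sum>p\<in>P. \<Sum>f\<in>F. (\<Prod>i=0..<t. A (Suc i) (f i)) * (of_int (sign p) * (\<Prod>i=0..<t. X (f i) (\<alpha> ! p i))))"
      unfolding sum_distrib_left by (simp only: prod.distrib mult.left_commute)
    then show ?thesis by (simp only: sum.swap[of _ F])
  qed
  also have "\<dots> = (\<Sum>f\<in>F. g f)"
    unfolding g_def mleib by (simp add: sum_distrib_left)
  also have "\<dots> = (\<Sum>f\<in>Fi. g f)"
    by (rule sum.mono_neutral_right[OF finF]) (auto simp: Fi_def g_def minor_noninj)
  finally have L: "maxminor t (\<lambda>r j. \<Sum>k\<in>{1..m}. A r k * X k j) \<alpha> = (\<Sum>f\<in>Fi. g f)" .
  define h where "h = (\<lambda>(c::nat list, p::nat\<Rightarrow>nat). restrict (\<lambda>i. c ! p i) {0..<t})"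
  have bij: "bij_betw h (Inc \<times> P) Fi"
    unfolding h_def Inc_def P_def Fi_def F_def K_def by (rule cb_bij)
  have "(\<Sum>f\<in>Fi. g f) = (\<Sum>x\<in>Inc \<times> P. g (h x))"
    by (rule sum.reindex_bij_betw[OF bij, symmetric])
  also have "\<dots> = (\<Sum>(c,p)\<in>Inc \<times> P. of_int (sign p) * (\<Prod>i=0..<t. A (Suc i) (c ! p i)) * minor X c \<alpha>)"
  proof (rule sum.cong[OF refl])
    fix x assume x: "x \<in> Inc \<times> P"
    obtain c p where cpx: "x = (c,p)" by (cases x)
    have c: "c \<in> Inc" and p: "p \<in> P" using x cpx by auto
    have lc: "length c = t" using c Inc_def by auto
    have pp: "p permutes {0..<t}" using p P_def by auto
    have mp: "map (h (c,p)) [0..<t] = map (\<lambda>i. c ! p i) [0..<t]" unfolding h_def by auto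
    have "g (h (c,p)) = (\<Prod>i=0..<t. A (Suc i) (h (c,p) i)) * (of_int (sign p) * minor X c \<alpha>)"
      unfolding g_def mp minor_map_perm[OF lc pp] ..
    also have "\<dots> = (\<Prod>i=0..<t. A (Suc i) (c ! p i)) * (of_int (sign p) * minor X c \<alpha>)"
      unfolding h_def by (intro arg_cong2[where f="(*)"] prod.cong refl) auto
    finally show "g (h x) = (case x of (c,p) \<Rightarrow> of_int (sign p) * (\<Prod>i=0..<t. A (Suc i) (c ! p i)) * minor X c \<alpha>)"
      unfolding cpx by (simp add: mult_ac)
  qed
  also have "\<dots> = (\<Sum>c\<in>Inc. \<Sum>p\<in>P. of_int (sign p) * (\<Prod>i=0..<t. A (Suc i) (c ! p i)) * minor X c \<alpha>)"
    by (simp add: sum.cartesian_product)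
  also have "\<dots> = (\<Sum>c\<in>Inc. maxminor t A c * minor X c \<alpha>)"
    unfolding maxminor_leib P_def by (simp add: sum_distrib_right)
  finally show ?thesis using L Inc_def by simp
qed

lemma prod_monom: "finite I \<Longrightarrow> (\<Prod>i\<in>I. monom (f i) (e i)) = monom (\<Prod>i\<in>I. f i) (\<Sum>i\<in>I. e i)"
  by (induction rule: finite_induct) (auto simp: mult_monom monom_0)

lemma enc_mset: "enc B (mset c) = (\<Sum>i\<in>{0..<length c}. B^(c!i))"
proof -
  have "image_mset (\<lambda>v. B^v) (mset c) = mset (map (\<lambda>v. B^v) c)" by simp
  then have "enc B (mset c) = sum_list (map (\<lambda>v. B^v) c)" unfolding enc_def by (simp only: sum_mset_sum_list)
  also have "\<dots> = (\<Sum>i\<in>{0..<length (map (\<lambda>v. B^v) c)}. map (\<lambda>v. B^v) c ! i)" by (rule sum_list_sum_nth)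
  also have "\<dots> = (\<Sum>i\<in>{0..<length c}. B^(c!i))" by simp
  finally show ?thesis .
qed

lemma of_int_monom: "(of_int k :: 'b::comm_ring_1 poly) * monom x e = monom (of_int k * x) e"
  by (simp add: of_int_poly monom_0[symmetric] mult_monom)

lemma maxminor_A1:
  fixes A :: "nat \<Rightarrow> nat \<Rightarrow> 'b::comm_ring_1"
  assumes "length c = t"
  shows "maxminor t (\<lambda>r k. monom (A r k) (B^k)) c = monom (maxminor t A c) (enc B (mset c))"
  unfolding maxminor_leib monom_sum
proof (rule sum.cong[OF refl])
  fix p assume "p \<in> {p. p permutes {0..<t}}"
  then have p: "p permutes {0..<t}" by simp
  have "(\<Sum>i\<in>{0..<t}. B^(c ! p i)) = (\<Sum>i\<in>{0..<t}. B^(c ! i))"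
    using sum.permute[OF p, of "\<lambda>i. B^(c!i)"] by (simp add: comp_def)
  also have "\<dots> = enc B (mset c)" using assms enc_mset by simp
  finally have e: "(\<Sum>i\<in>{0..<t}. B^(c ! p i)) = enc B (mset c)" .
  show "of_int (sign p) * (\<Prod>i = 0..<t. monom (A (Suc i) (c ! p i)) (B ^ (c ! p i))) =
         monom (of_int (sign p) * (\<Prod>i = 0..<t. A (Suc i) (c ! p i))) (enc B (mset c))"
    by (simp add: prod_monom e of_int_monom)
qed

lemma maxminor_rep:
  assumes "length d = t" "\<not> distinct d"
  shows "maxminor t A d = 0"
proof -
  obtain i j where ij: "i < t" "j < t" "i \<noteq> j" "d ! i = d ! j"
    using assms distinct_conv_nth by metis
  let ?A = "mat t t (\<lambda>(i,j). A ([1..<t+1] ! i) (d!j))"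
  have "col ?A i = col ?A j" using ij by (auto simp: col_mat)
  then have "det ?A = 0" using ij by (intro det_identical_columns[of ?A t i j]) auto
  moreover have L: "length [1..<t+1] = t" by simp
  ultimately show ?thesis unfolding maxminor_def minor_def L by (simp del: upt_Suc)
qed

lemma sum_list_sum_swap: "sum_list (map (\<lambda>x. \<Sum>y\<in>S. f x y) R) = (\<Sum>y\<in>S. sum_list (map (\<lambda>x. f x y) R))"
  by (induction R) (auto simp: sum.distrib)

lemma sum_list_monom: "sum_list (map (\<lambda>x. monom (g x) e) R) = monom (sum_list (map g R)) e"
  by (induction R) (auto simp: add_monom)

theorem lemma6p2:
  fixes t m n :: nat and R :: "(int \<times> nat list \<times> nat list) list"
    and v u :: "nat multiset"
    and X A :: "nat \<Rightarrow> nat \<Rightarrow> 'a::comm_ring_1"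
  assumes "pluecker_rel t n R"
    and "homogeneous_rel v R"
    and "set_mset u \<subseteq> {1..m}"
    and "size u = 2 * t"
  shows "(\<Sum>c\<in>{c. sorted_wrt (<) c \<and> length c = t \<and> mset c \<subseteq># u}.
           let c' = sorted_list_of_multiset (u - mset c) in
           maxminor t A c * maxminor t A c' *
           (\<Sum>(l,a,b)\<leftarrow>R. of_int l * minor X c a * minor X c' b)) = 0"
proof -
  define B where "B = 2*t+1"
  define Inc where "Inc = {c. sorted_wrt (<) c \<and> length c = t \<and> set c \<subseteq> {1..m}}"
  define E where "E = (\<lambda>c. enc B (mset c))"
  define A1 :: "nat \<Rightarrow> nat \<Rightarrow> 'a poly" where "A1 = (\<lambda>r k. monom (A r k) (B^k))"
  define X1 :: "nat \<Rightarrow> nat \<Rightarrow> 'a poly" where "X1 = (\<lambda>r k. [:X r k:])"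
  define M where "M = (\<lambda>r j. \<Sum>k\<in>{1..m}. A1 r k * X1 k j)"
  define T where "T = (\<lambda>c d. maxminor t A c * maxminor t A d *
           (\<Sum>(l,a,b)\<leftarrow>R. of_int l * minor X c a * minor X d b))"
  have finInc: "finite Inc"
  proof (rule finite_subset)
    show "Inc \<subseteq> {xs. set xs \<subseteq> {1..m} \<and> length xs = t}" unfolding Inc_def by auto
    show "finite {xs. set xs \<subseteq> {1..m} \<and> length xs = t}" by (rule finite_lists_length_eq) simp
  qed
  have MM: "maxminor t M a = (\<Sum>c\<in>Inc. monom (maxminor t A c * minor X c a) (E c))" for a
  proof -
    have "maxminor t M a = (\<Sum>c\<in>Inc. maxminor t A1 c * minor X1 c a)"
      unfolding M_def Inc_def by (rule cauchy_binet)
    also have "\<dots> = (\<Sum>c\<in>Inc. monom (maxminor t A c * minor X c a) (E c))"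
    proof (rule sum.cong[OF refl])
      fix c assume "c \<in> Inc"
      then have lc: "length c = t" unfolding Inc_def by auto
      have "maxminor t A1 c = monom (maxminor t A c) (E c)"
        unfolding A1_def E_def by (rule maxminor_A1[OF lc])
      moreover have "minor X1 c a = monom (minor X c a) 0"
        unfolding X1_def minor_const monom_0 ..
      ultimately show "maxminor t A1 c * minor X1 c a = monom (maxminor t A c * minor X c a) (E c)"
        by (simp add: mult_monom)
    qed
    finally show ?thesis .
  qed
  define W where "W = (\<lambda>c d. \<Sum>(l,a,b)\<leftarrow>R. of_int l * (maxminor t A c * minor X c a) * (maxminor t A d * minor X d b))"
  have WT: "W c d = T c d" for c d
  proof -
    have "T c d = (\<Sum>(l,a,b)\<leftarrow>R. maxminor t A c * maxminor t A d * (of_int l * minor X c a * minor X d b))"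
      unfolding T_def sum_list_const_mult[symmetric] by (simp add: case_prod_beta')
    also have "\<dots> = W c d" unfolding W_def
      by (intro arg_cong[where f=sum_list] map_cong refl) (auto simp: mult_ac)
    finally show ?thesis by simp
  qed
  have P0: "(\<Sum>(l,a,b)\<leftarrow>R. of_int l * maxminor t M a * maxminor t M b) = 0"
    by (rule pluecker_any[OF assms(1)])
  have P1: "(\<Sum>(l,a,b)\<leftarrow>R. of_int l * maxminor t M a * maxminor t M b) =
     (\<Sum>(c,d)\<in>Inc\<times>Inc. monom (W c d) (E c + E d))"
  proof -
    have "(\<Sum>(l,a,b)\<leftarrow>R. of_int l * maxminor t M a * maxminor t M b) =
      sum_list (map (\<lambda>x. \<Sum>y\<in>Inc\<times>Inc. monom (case x of (l,a,b) \<Rightarrow> of_int l * (maxminor t A (fst y) * minor X (fst y) a) * (maxminor t A (snd y) * minor X (snd y) b)) (E (fst y) + E (snd y))) R)"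
    proof (intro arg_cong[where f=sum_list] map_cong refl)
      fix x assume "x \<in> set R"
      obtain l a b where x: "x = (l,a,b)" by (cases x) auto
      show "(case x of (l,a,b) \<Rightarrow> of_int l * maxminor t M a * maxminor t M b) =
        (\<Sum>y\<in>Inc\<times>Inc. monom (case x of (l,a,b) \<Rightarrow> of_int l * (maxminor t A (fst y) * minor X (fst y) a) * (maxminor t A (snd y) * minor X (snd y) b)) (E (fst y) + E (snd y)))"
      proof -
        have "of_int l * maxminor t M a * maxminor t M b =
          (\<Sum>c\<in>Inc. \<Sum>d\<in>Inc. of_int l * (monom (maxminor t A c * minor X c a) (E c) * monom (maxminor t A d * minor X d b) (E d)))"
          unfolding MM by (simp only: mult.assoc sum_product) (simp only: sum_distrib_left)
        also have "\<dots> = (\<Sum>c\<in>Inc. \<Sum>d\<in>Inc. monom (of_int l * (maxminor t A c * minor X c a) * (maxminor t A d * minor X d b)) (E c + E d))"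
          by (simp add: mult_monom of_int_monom mult.assoc)
        also have "\<dots> = (\<Sum>y\<in>Inc\<times>Inc. monom (of_int l * (maxminor t A (fst y) * minor X (fst y) a) * (maxminor t A (snd y) * minor X (snd y) b)) (E (fst y) + E (snd y)))"
          unfolding sum.cartesian_product by (simp add: case_prod_beta')
        finally show ?thesis unfolding x by simp
      qed
    qed
    also have "\<dots> = (\<Sum>y\<in>Inc\<times>Inc. monom (W (fst y) (snd y)) (E (fst y) + E (snd y)))"
      unfolding sum_list_sum_swap sum_list_monom W_def
      by (intro sum.cong refl arg_cong2[where f=monom] arg_cong[where f=sum_list] map_cong)
    finally show ?thesis by (simp add: case_prod_beta')
  qed
  define Pairs where "Pairs = {x\<in>Inc\<times>Inc. mset (fst x) + mset (snd x) = u}"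
  have cntu: "\<forall>v. count u v < B"
  proof
    fix v have "count u v \<le> size u" by (rule count_le_size)
    then show "count u v < B" using assms(4) unfolding B_def by simp
  qed
  have S0: "(\<Sum>x\<in>Pairs. W (fst x) (snd x)) = 0"
  proof -
    have "0 = coeff (\<Sum>(c,d)\<in>Inc\<times>Inc. monom (W c d) (E c + E d)) (enc B u)"
      using P0 P1 by simp
    also have "\<dots> = (\<Sum>x\<in>Inc\<times>Inc. if E (fst x) + E (snd x) = enc B u then W (fst x) (snd x) else 0)"
      unfolding coeff_sum by (intro sum.cong refl) (auto simp: coeff_monom)
    also have "\<dots> = (\<Sum>x\<in>Inc\<times>Inc. if mset (fst x) + mset (snd x) = u then W (fst x) (snd x) else 0)"
    proof (intro sum.cong refl)
      fix x assume x: "x \<in> Inc \<times> Inc"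
      have "size (mset (fst x) + mset (snd x)) = 2*t" using x unfolding Inc_def by auto
      have c1: "\<forall>v. count (mset (fst x) + mset (snd x)) v < B"
      proof
        fix v have "count (mset (fst x) + mset (snd x)) v \<le> size (mset (fst x) + mset (snd x))" by (rule count_le_size)
        then show "count (mset (fst x) + mset (snd x)) v < B" using \<open>size (mset (fst x) + mset (snd x)) = 2*t\<close> unfolding B_def by simp
      qed
      have "E (fst x) + E (snd x) = enc B (mset (fst x) + mset (snd x))" unfolding E_def enc_add ..
      then have "(E (fst x) + E (snd x) = enc B u) = (mset (fst x) + mset (snd x) = u)"
        using enc_inj[OF c1 cntu] by auto
      then show "(if E (fst x) + E (snd x) = enc B u then W (fst x) (snd x) else 0) =
          (if mset (fst x) + mset (snd x) = u then W (fst x) (snd x) else 0)" by simp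
    qed
    also have "\<dots> = (\<Sum>x\<in>Pairs. W (fst x) (snd x))"
      unfolding Pairs_def using finInc by (simp add: sum.inter_filter)
    finally show ?thesis by simp
  qed
  define Cu where "Cu = {c. sorted_wrt (<) c \<and> length c = t \<and> mset c \<subseteq># u}"
  define sl where "sl = (\<lambda>c. sorted_list_of_multiset (u - mset c))"
  define Cu1 where "Cu1 = {c\<in>Cu. distinct (sl c)}"
  have CuInc: "Cu \<subseteq> Inc"
  proof
    fix c assume "c \<in> Cu"
    then have "sorted_wrt (<) c" "length c = t" "mset c \<subseteq># u" unfolding Cu_def by auto
    moreover have "set c \<subseteq> set_mset u" using \<open>mset c \<subseteq># u\<close>
      by (metis mset_subset_eqD set_mset_mset subsetI)
    ultimately show "c \<in> Inc" unfolding Inc_def using assms(3) by auto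
  qed
  have finCu: "finite Cu" using finite_subset[OF CuInc finInc] .
  have lsl: "length (sl c) = t" if "c \<in> Cu" for c
  proof -
    have "length (sl c) = size (u - mset c)" unfolding sl_def
      by (metis mset_sorted_list_of_multiset size_mset)
    also have "\<dots> = size u - size (mset c)" using that unfolding Cu_def by (auto simp: size_Diff_submset)
    finally show ?thesis using that assms(4) unfolding Cu_def by auto
  qed
  have "(\<Sum>c\<in>Cu. let c' = sl c in maxminor t A c * maxminor t A c' *
           (\<Sum>(l,a,b)\<leftarrow>R. of_int l * minor X c a * minor X c' b)) = (\<Sum>c\<in>Cu. T c (sl c))"
    unfolding T_def Let_def ..
  also have "\<dots> = (\<Sum>c\<in>Cu1. T c (sl c))"
  proof (rule sum.mono_neutral_right[OF finCu])
    show "Cu1 \<subseteq> Cu" unfolding Cu1_def by auto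
    show "\<forall>c\<in>Cu - Cu1. T c (sl c) = 0"
    proof
      fix c assume c: "c \<in> Cu - Cu1"
      then have "maxminor t A (sl c) = 0" using maxminor_rep[OF lsl] unfolding Cu1_def by auto
      then show "T c (sl c) = 0" unfolding T_def by simp
    qed
  qed
  also have "\<dots> = (\<Sum>x\<in>Pairs. T (fst x) (snd x))"
  proof (rule sum.reindex_bij_witness[where j="\<lambda>c. (c, sl c)" and i=fst])
    fix c assume c: "c \<in> Cu1"
    show "fst (c, sl c) = c" by simp
    show "T (fst (c, sl c)) (snd (c, sl c)) = T c (sl c)" by simp
    have cCu: "c \<in> Cu" and ds: "distinct (sl c)" using c unfolding Cu1_def by auto
    have sub: "mset c \<subseteq># u" using cCu unfolding Cu_def by auto
    have ms: "mset (sl c) = u - mset c" unfolding sl_def by simp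
    have "sorted (sl c)" unfolding sl_def by simp
    then have ss: "sorted_wrt (<) (sl c)" using ds strict_sorted_iff by blast
    have "set (sl c) \<subseteq> set_mset u"
      by (metis ms in_diffD set_mset_mset subsetI)
    then have "sl c \<in> Inc" unfolding Inc_def using ss lsl[OF cCu] assms(3) by auto
    moreover have "c \<in> Inc" using cCu CuInc by auto
    moreover have "mset c + mset (sl c) = u" using ms sub by (simp add: subset_mset.add_diff_inverse)
    ultimately show "(c, sl c) \<in> Pairs" unfolding Pairs_def by auto
  next
    fix x assume x: "x \<in> Pairs"
    obtain c d where cd: "x = (c,d)" by (cases x)
    have c: "c \<in> Inc" and d: "d \<in> Inc" and u: "mset c + mset d = u"
      using x cd unfolding Pairs_def by auto
    have "sl c = sorted_list_of_multiset (mset d)" unfolding sl_def using u[symmetric] by simp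
    also have "\<dots> = d" using d unfolding Inc_def by (simp add: sorted_sort_id strict_sorted_iff)
    finally have sld: "sl c = d" .
    then show "(fst x, sl (fst x)) = x" using cd by simp
    have "c \<in> Cu" using c u unfolding Inc_def Cu_def by auto
    moreover have "distinct d" using d unfolding Inc_def by (simp add: strict_sorted_iff)
    ultimately show "fst x \<in> Cu1" unfolding Cu1_def using sld cd by auto
  qed
  also have "\<dots> = (\<Sum>x\<in>Pairs. W (fst x) (snd x))" using WT by simp
  also have "\<dots> = 0" using S0 .
  finally show ?thesis unfolding Cu_def sl_def by simp
qed

end
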